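(* For $n\in\mathbb{N}$ let $(U_k^{(n)})_{k\in\mathbb{N}}$ be independent random variables uniformly distributed on $\{1,\dots,n\}$. Assume $m_n\to\infty$ and $m_n=o(n)$ as $n\to\infty$. Then $${\rm Var}\Bigl(\sum_{m_n<p\le n,\ p\ \text{prime}}\log p\Bigl(\sum_{k=1}^{m_n}\mathbbm{1}_{\{\lambda_p(U_k^{(n)})\ge1\}}-\mathbbm{1}_{\{\max_{1\le k\le m_n}\lambda_p(U_k^{(n)})\ge1\}}\Bigr)\Bigr)=O(m_n\log m_n),\qquad n\to\infty.$$
   Context: For a prime $p$ and $k\in\mathbb{N}$, $\lambda_p(k)$ is the exponent of $p$ in the prime factorization of $k$. *)

theory Defs
  imports "HOL-Probability.Probability" "HOL-Library.Landau_Symbols"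
    "HOL-Computational_Algebra.Primes"
begin

definition lam :: "nat \<Rightarrow> nat \<Rightarrow> nat" where
  "lam p k = multiplicity p k"

text \<open>Joint law of m independent random variables U_1,...,U_m, each uniform on
  {1..n}: the uniform distribution on the functions {1..m} \<rightarrow> {1..n}.\<close>
definition unif_tuples :: "nat \<Rightarrow> nat \<Rightarrow> (nat \<Rightarrow> nat) pmf" where
  "unif_tuples n m = pmf_of_set (PiE {1..m} (\<lambda>_. {1..n}))"

definition S :: "nat \<Rightarrow> nat \<Rightarrow> (nat \<Rightarrow> nat) \<Rightarrow> real" where
  "S n m U = (\<Sum>p\<in>{p. prime p \<and> m < p \<and> p \<le> n}.
      ln (real p) * ((\<Sum>k=1..m. if lam p (U k) \<ge> 1 then 1 else 0)
        - (if Max ((\<lambda>k. lam p (U k)) ` {1..m}) \<ge> 1 then 1 else 0)))"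

end

theory Submission
  imports Defs
begin

definition avg :: "'a set \<Rightarrow> ('a \<Rightarrow> real) \<Rightarrow> real" where
  "avg A f = sum f A / real (card A)"

lemma avg_add: "avg A (\<lambda>x. f x + g x) = avg A f + avg A g"
  unfolding avg_def by (simp add: sum.distrib add_divide_distrib)

lemma avg_diff: "avg A (\<lambda>x. f x - g x) = avg A f - avg A g"
  unfolding avg_def by (simp add: sum_subtractf diff_divide_distrib)

lemma avg_cmult: "avg A (\<lambda>x. c * f x) = c * avg A f"
  unfolding avg_def by (simp add: sum_distrib_left)

lemma avg_multc: "avg A (\<lambda>x. f x * c) = avg A f * c"
  unfolding avg_def by (simp add: sum_distrib_right)

lemma avg_const: "finite A \<Longrightarrow> A \<noteq> {} \<Longrightarrow> avg A (\<lambda>_. c) = c"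
  unfolding avg_def by simp

lemma avg_cong: "(\<And>x. x \<in> A \<Longrightarrow> f x = g x) \<Longrightarrow> avg A f = avg A g"
  unfolding avg_def by (metis sum.cong)

lemma avg_mono: "(\<And>x. x \<in> A \<Longrightarrow> f x \<le> g x) \<Longrightarrow> avg A f \<le> avg A g"
  unfolding avg_def by (intro divide_right_mono sum_mono) auto

lemma avg_nonneg: "(\<And>x. x \<in> A \<Longrightarrow> 0 \<le> f x) \<Longrightarrow> 0 \<le> avg A f"
  unfolding avg_def by (intro divide_nonneg_nonneg sum_nonneg) auto

lemma avg_sum: "avg A (\<lambda>x. \<Sum>i\<in>I. f i x) = (\<Sum>i\<in>I. avg A (f i))"
  unfolding avg_def by (simp add: sum.swap[of _ I A] sum_divide_distrib)

lemma avg_swap: "avg A (\<lambda>x. avg B (\<lambda>y. f x y)) = avg B (\<lambda>y. avg A (\<lambda>x. f x y))"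
  unfolding avg_def by (simp add: sum.swap[of _ A B] sum_divide_distrib[symmetric])

lemma avg_sq_expand:
  assumes "finite A" "A \<noteq> {}"
  shows "avg A (\<lambda>x. (f x - c)^2) = avg A (\<lambda>x. (f x)^2) - 2 * c * avg A f + c^2"
proof -
  have "avg A (\<lambda>x. (f x - c)^2) = avg A (\<lambda>x. (f x)^2 - (2 * c) * f x + c^2)"
    by (rule avg_cong) (simp add: power2_eq_square algebra_simps)
  also have "\<dots> = avg A (\<lambda>x. (f x)^2) - 2 * c * avg A f + c^2"
    using assms by (simp add: avg_add avg_diff avg_cmult avg_const)
  finally show ?thesis .
qed

lemma avg_jensen:
  assumes "finite A" "A \<noteq> {}"
  shows "(avg A f)^2 \<le> avg A (\<lambda>x. (f x)^2)"
proof -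
  have "0 \<le> avg A (\<lambda>x. (f x - avg A f)^2)" by (rule avg_nonneg) simp
  also have "\<dots> = avg A (\<lambda>x. (f x)^2) - (avg A f)^2"
    using avg_sq_expand[OF assms, of f "avg A f"] by (simp add: power2_eq_square)
  finally show ?thesis by simp
qed

lemma sum_PiE_insert:
  assumes "i \<notin> I" "finite I" "finite A"
  shows "(\<Sum>x\<in>PiE (insert i I) (\<lambda>_. A). f x) = (\<Sum>y\<in>A. \<Sum>g\<in>PiE I (\<lambda>_. A). f (g(i:=y)))"
proof -
  have "(\<Sum>x\<in>PiE (insert i I) (\<lambda>_. A). f x) = (\<Sum>(y,g)\<in>A \<times> PiE I (\<lambda>_. A). f (g(i:=y)))"
    using assms
    by (intro sum.reindex_bij_witness[of _ "\<lambda>(y,g). g(i := y)" "\<lambda>g. (g i, g(i := undefined))"])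
       (auto simp: PiE_def extensional_def)
  also have "\<dots> = (\<Sum>y\<in>A. \<Sum>g\<in>PiE I (\<lambda>_. A). f (g(i:=y)))"
    by (subst sum.cartesian_product) auto
  finally show ?thesis .
qed

lemma avg_PiE_insert:
  assumes "i \<notin> I" "finite I" "finite A"
  shows "avg (PiE (insert i I) (\<lambda>_. A)) f = avg A (\<lambda>y. avg (PiE I (\<lambda>_. A)) (\<lambda>g. f (g(i:=y))))"
proof -
  have c: "card (PiE (insert i I) (\<lambda>_. A)) = card A * card (PiE I (\<lambda>_. A))"
    using assms by (simp add: card_PiE)
  show ?thesis
    unfolding avg_def sum_PiE_insert[OF assms] c
    by (simp add: sum_divide_distrib[symmetric])
qed

lemma avg_resample:
  assumes "k \<in> I" "finite I" "finite A" "A \<noteq> {}"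
  shows "avg (PiE I (\<lambda>_. A)) (\<lambda>x. avg A (\<lambda>y. H (x(k:=y)))) = avg (PiE I (\<lambda>_. A)) H"
proof -
  have I: "I = insert k (I - {k})" using assms by auto
  have f: "finite (I - {k})" "k \<notin> I - {k}" using assms by auto
  have "avg (PiE I (\<lambda>_. A)) (\<lambda>x. avg A (\<lambda>y. H (x(k:=y))))
      = avg A (\<lambda>z. avg (PiE (I-{k}) (\<lambda>_. A)) (\<lambda>g. avg A (\<lambda>y. H (g(k:=y)))))"
    by (subst I, subst avg_PiE_insert[OF f(2) f(1) assms(3)]) simp
  also have "\<dots> = avg (PiE (I-{k}) (\<lambda>_. A)) (\<lambda>g. avg A (\<lambda>y. H (g(k:=y))))"
    using assms by (simp add: avg_const)
  also have "\<dots> = avg A (\<lambda>y. avg (PiE (I-{k}) (\<lambda>_. A)) (\<lambda>g. H (g(k:=y))))"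
    by (rule avg_swap)
  also have "\<dots> = avg (PiE I (\<lambda>_. A)) H"
    by (subst (2) I, subst avg_PiE_insert[OF f(2) f(1) assms(3)]) simp
  finally show ?thesis .
qed

lemma avg_coord1:
  assumes "k \<in> I" "finite I" "finite A" "A \<noteq> {}"
  shows "avg (PiE I (\<lambda>_. A)) (\<lambda>x. h (x k)) = avg A h"
proof -
  have "avg (PiE I (\<lambda>_. A)) (\<lambda>x. h (x k)) = avg (PiE I (\<lambda>_. A)) (\<lambda>x. avg A (\<lambda>y. h ((x(k:=y)) k)))"
    using avg_resample[OF assms, of "\<lambda>x. h (x k)"] by simp
  also have "\<dots> = avg (PiE I (\<lambda>_. A)) (\<lambda>x. avg A h)" by simp
  also have "\<dots> = avg A h"
    using assms by (intro avg_const) (auto simp: PiE_eq_empty_iff finite_PiE)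
  finally show ?thesis .
qed

lemma avg_coord2:
  assumes "k \<in> I" "j \<in> I" "k \<noteq> j" "finite I" "finite A" "A \<noteq> {}"
  shows "avg (PiE I (\<lambda>_. A)) (\<lambda>x. h (x k) (x j)) = avg A (\<lambda>a. avg A (\<lambda>b. h a b))"
proof -
  have "avg (PiE I (\<lambda>_. A)) (\<lambda>x. h (x k) (x j))
     = avg (PiE I (\<lambda>_. A)) (\<lambda>x. avg A (\<lambda>a. h ((x(k:=a)) k) ((x(k:=a)) j)))"
    using avg_resample[OF assms(1,4,5,6), of "\<lambda>x. h (x k) (x j)"] by simp
  also have "\<dots> = avg (PiE I (\<lambda>_. A)) (\<lambda>x. avg A (\<lambda>a. h a (x j)))" using assms(3) by simp
  also have "\<dots> = avg A (\<lambda>a. avg (PiE I (\<lambda>_. A)) (\<lambda>x. h a (x j)))" by (rule avg_swap)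
  also have "\<dots> = avg A (\<lambda>a. avg A (\<lambda>b. h a b))"
    using avg_coord1[OF assms(2,4,5,6)] by simp
  finally show ?thesis .
qed

lemma avg_coord3:
  assumes "k \<in> I" "j \<in> I" "l \<in> I" "k \<noteq> j" "k \<noteq> l" "j \<noteq> l" "finite I" "finite A" "A \<noteq> {}"
  shows "avg (PiE I (\<lambda>_. A)) (\<lambda>x. h (x k) (x j) (x l)) = avg A (\<lambda>a. avg A (\<lambda>b. avg A (\<lambda>c. h a b c)))"
proof -
  have "avg (PiE I (\<lambda>_. A)) (\<lambda>x. h (x k) (x j) (x l))
     = avg (PiE I (\<lambda>_. A)) (\<lambda>x. avg A (\<lambda>a. h ((x(k:=a)) k) ((x(k:=a)) j) ((x(k:=a)) l)))"
    using avg_resample[OF assms(1,7,8,9), of "\<lambda>x. h (x k) (x j) (x l)"] by simp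
  also have "\<dots> = avg (PiE I (\<lambda>_. A)) (\<lambda>x. avg A (\<lambda>a. h a (x j) (x l)))" using assms by simp
  also have "\<dots> = avg A (\<lambda>a. avg (PiE I (\<lambda>_. A)) (\<lambda>x. h a (x j) (x l)))" by (rule avg_swap)
  also have "\<dots> = avg A (\<lambda>a. avg A (\<lambda>b. avg A (\<lambda>c. h a b c)))"
    using avg_coord2[OF assms(2,3,6,7,8,9)] by simp
  finally show ?thesis .
qed

lemma avg_pair_var:
  assumes "finite A" "A \<noteq> {}"
  shows "avg A (\<lambda>y. (a y)^2) - (avg A a)^2 \<le> avg A (\<lambda>y. avg A (\<lambda>z. (a y - a z)^2))"
proof -
  have "avg A (\<lambda>y. avg A (\<lambda>z. (a y - a z)^2)) = avg A (\<lambda>y. avg A (\<lambda>z. (a z)^2) - 2 * a y * avg A a + (a y)^2)"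
    by (rule avg_cong) (simp add: avg_sq_expand[OF assms, of a, symmetric] power2_commute)
  also have "\<dots> = avg A (\<lambda>z. (a z)^2) - 2 * (avg A a)^2 + avg A (\<lambda>y. (a y)^2)"
    using assms by (simp add: avg_add avg_diff avg_const avg_multc avg_cmult power2_eq_square)
  finally have e: "avg A (\<lambda>y. avg A (\<lambda>z. (a y - a z)^2)) = 2 * (avg A (\<lambda>y. (a y)^2) - (avg A a)^2)" by simp
  have "(avg A a)^2 \<le> avg A (\<lambda>y. (a y)^2)" by (rule avg_jensen[OF assms])
  with e show ?thesis by simp
qed

lemma efron_stein:
  assumes "finite I" "finite A" "A \<noteq> {}"
  shows "avg (PiE I (\<lambda>_. A)) (\<lambda>x. (F x)^2) - (avg (PiE I (\<lambda>_. A)) F)^2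
     \<le> (\<Sum>k\<in>I. avg (PiE I (\<lambda>_. A)) (\<lambda>x. avg A (\<lambda>y. (F x - F (x(k:=y)))^2)))"
  using assms(1)
proof (induction I arbitrary: F rule: finite_induct)
  case empty
  show ?case by (simp add: avg_def)
next
  case (insert i I)
  define X where "X = PiE I (\<lambda>_. A)"
  define G where "G g = avg A (\<lambda>y. F (g(i:=y)))" for g
  have fX: "finite X" "X \<noteq> {}" unfolding X_def using insert assms
    by (auto simp: finite_PiE PiE_eq_empty_iff)
  have T: "avg (PiE (insert i I) (\<lambda>_. A)) H = avg A (\<lambda>y. avg X (\<lambda>g. H (g(i:=y))))" for H
    unfolding X_def by (rule avg_PiE_insert) (use insert assms in auto)
  have h1: "avg (PiE (insert i I) (\<lambda>_. A)) F = avg X G"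
    unfolding T G_def by (rule avg_swap)
  have h2: "avg (PiE (insert i I) (\<lambda>_. A)) (\<lambda>x. (F x)^2) = avg X (\<lambda>g. avg A (\<lambda>y. (F (g(i:=y)))^2))"
    unfolding T by (rule avg_swap)
  have IH: "avg X (\<lambda>x. (G x)^2) - (avg X G)^2 \<le> (\<Sum>k\<in>I. avg X (\<lambda>x. avg A (\<lambda>z. (G x - G (x(k:=z)))^2)))"
    unfolding X_def by (rule insert.IH)
  have h3: "avg X (\<lambda>x. avg A (\<lambda>z. (G x - G (x(k:=z)))^2))
     \<le> avg (PiE (insert i I) (\<lambda>_. A)) (\<lambda>x. avg A (\<lambda>z. (F x - F (x(k:=z)))^2))" if k: "k \<in> I" for k
  proof -
    have ki: "k \<noteq> i" using k insert by auto
    have "avg X (\<lambda>x. avg A (\<lambda>z. (G x - G (x(k:=z)))^2))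
        \<le> avg X (\<lambda>g. avg A (\<lambda>z. avg A (\<lambda>y. (F (g(i:=y)) - F (g(i:=y,k:=z)))^2)))"
    proof (intro avg_mono)
      fix g z
      have "G g - G (g(k:=z)) = avg A (\<lambda>y. F (g(i:=y)) - F (g(i:=y,k:=z)))"
        unfolding G_def avg_diff[symmetric] using ki by (simp add: fun_upd_twist)
      then show "(G g - G (g(k:=z)))^2 \<le> avg A (\<lambda>y. (F (g(i:=y)) - F (g(i:=y,k:=z)))^2)"
        using avg_jensen[OF assms(2,3)] by simp
    qed
    also have "\<dots> = avg X (\<lambda>g. avg A (\<lambda>y. avg A (\<lambda>z. (F (g(i:=y)) - F (g(i:=y,k:=z)))^2)))"
      by (intro avg_cong avg_swap)
    also have "\<dots> = avg (PiE (insert i I) (\<lambda>_. A)) (\<lambda>x. avg A (\<lambda>z. (F x - F (x(k:=z)))^2))"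
      unfolding T by (rule avg_swap)
    finally show ?thesis .
  qed
  have h4: "avg X (\<lambda>g. avg A (\<lambda>y. (F (g(i:=y)))^2) - (G g)^2)
     \<le> avg (PiE (insert i I) (\<lambda>_. A)) (\<lambda>x. avg A (\<lambda>z. (F x - F (x(i:=z)))^2))"
  proof -
    have "avg X (\<lambda>g. avg A (\<lambda>y. (F (g(i:=y)))^2) - (G g)^2)
       \<le> avg X (\<lambda>g. avg A (\<lambda>y. avg A (\<lambda>z. (F (g(i:=y)) - F (g(i:=z)))^2)))"
      unfolding G_def by (intro avg_mono avg_pair_var[OF assms(2,3)])
    also have "\<dots> = avg (PiE (insert i I) (\<lambda>_. A)) (\<lambda>x. avg A (\<lambda>z. (F x - F (x(i:=z)))^2))"
      unfolding T by (simp add: avg_swap[of X A])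
    finally show ?thesis .
  qed
  have "avg (PiE (insert i I) (\<lambda>_. A)) (\<lambda>x. (F x)^2) - (avg (PiE (insert i I) (\<lambda>_. A)) F)^2
      = avg X (\<lambda>g. avg A (\<lambda>y. (F (g(i:=y)))^2) - (G g)^2) + (avg X (\<lambda>x. (G x)^2) - (avg X G)^2)"
    unfolding h1 h2 avg_diff by simp
  also have "\<dots> \<le> avg (PiE (insert i I) (\<lambda>_. A)) (\<lambda>x. avg A (\<lambda>z. (F x - F (x(i:=z)))^2))
      + (\<Sum>k\<in>I. avg (PiE (insert i I) (\<lambda>_. A)) (\<lambda>x. avg A (\<lambda>z. (F x - F (x(k:=z)))^2)))"
  proof -
    have "(\<Sum>k\<in>I. avg X (\<lambda>x. avg A (\<lambda>z. (G x - G (x(k:=z)))^2)))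
      \<le> (\<Sum>k\<in>I. avg (PiE (insert i I) (\<lambda>_. A)) (\<lambda>x. avg A (\<lambda>z. (F x - F (x(k:=z)))^2)))"
      by (rule sum_mono) (rule h3)
    then show ?thesis using h4 IH by linarith
  qed
  also have "\<dots> = (\<Sum>k\<in>insert i I. avg (PiE (insert i I) (\<lambda>_. A)) (\<lambda>x. avg A (\<lambda>z. (F x - F (x(k:=z)))^2)))"
    using insert by simp
  finally show ?case .
qed

definition Pr :: "nat \<Rightarrow> nat \<Rightarrow> nat set" where
  "Pr a b = {p. prime p \<and> a < p \<and> p \<le> b}"

lemma Pr_finite[simp]: "finite (Pr a b)"
  unfolding Pr_def by (rule finite_subset[of _ "{..b}"]) auto

lemma Pr_pos: "p \<in> Pr a b \<Longrightarrow> 0 < p"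
  unfolding Pr_def by (auto dest: prime_gt_0_nat)

lemma prod_primes_dvd:
  fixes N :: nat
  shows "finite Q \<Longrightarrow> (\<forall>p\<in>Q. prime p \<and> p dvd N) \<Longrightarrow> prod id Q dvd N"
proof (induction Q rule: finite_induct)
  case empty then show ?case by simp
next
  case (insert p Q)
  have pp: "prime p" "p dvd N" using insert by auto
  have "\<not> p dvd prod id Q"
  proof
    assume "p dvd prod id Q"
    then obtain q where "q \<in> Q" "p dvd q" using prime_dvd_prod_iff[OF insert(1) pp(1)] by auto
    moreover have "prime q" using insert \<open>q \<in> Q\<close> by auto
    ultimately have "p = q" using pp(1) by (simp add: primes_dvd_imp_eq)
    with \<open>q \<in> Q\<close> insert(2) show False by simp
  qed
  then have "coprime p (prod id Q)" using pp(1) by (simp add: prime_imp_coprime)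
  moreover have "prod id Q dvd N" using insert by auto
  ultimately have "p * prod id Q dvd N" using pp(2) by (simp add: divides_mult)
  then show ?case using insert by simp
qed

lemma block_theta:
  assumes "k \<ge> 1"
  shows "(\<Sum>p\<in>Pr k (2*k). ln (real p)) \<le> 2 * real k * ln 2"
proof -
  have dv: "prod id (Pr k (2*k)) dvd ((2*k) choose k)"
  proof (rule prod_primes_dvd)
    show "\<forall>p\<in>Pr k (2 * k). prime p \<and> p dvd (2 * k choose k)"
    proof
      fix p assume p: "p \<in> Pr k (2*k)"
      then have pr: "prime p" "k < p" "p \<le> 2*k" unfolding Pr_def by auto
      have e: "fact k * fact (2*k - k) * ((2*k) choose k) = (fact (2*k) :: nat)"
        by (rule binomial_fact_lemma) simp
      have "p dvd fact (2*k)" using pr by (simp add: prime_dvd_fact_iff)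
      then have "p dvd fact k * fact k * ((2*k) choose k)" using e by simp
      moreover have "\<not> p dvd fact k * fact k" using pr
        by (simp add: prime_dvd_mult_iff prime_dvd_fact_iff)
      ultimately show "prime p \<and> p dvd (2 * k choose k)" using pr
        by (simp add: prime_dvd_mult_iff)
    qed
  qed auto
  have pos: "(2*k choose k) > 0" by simp
  have "prod id (Pr k (2*k)) \<le> (2*k choose k)" using dvd_imp_le[OF dv pos] .
  also have "\<dots> \<le> 2^(2*k)" by (rule binomial_le_pow2)
  finally have le: "real (prod id (Pr k (2*k))) \<le> 2 ^ (2*k)"
    by (metis of_nat_le_iff of_nat_numeral of_nat_power)
  have nz: "\<And>p. p \<in> Pr k (2*k) \<Longrightarrow> real p \<noteq> 0" unfolding Pr_def by auto
  have "(\<Sum>p\<in>Pr k (2*k). ln (real p)) = ln (\<Prod>p\<in>Pr k (2*k). real p)"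
    by (rule ln_prod[symmetric]) (auto dest: Pr_pos)
  also have "(\<Prod>p\<in>Pr k (2*k). real p) = real (prod id (Pr k (2*k)))" by simp
  also have "ln \<dots> \<le> ln (2 ^ (2*k))"
  proof -
    have "0 < (\<Prod>p\<in>Pr k (2*k). real p)"
      by (rule prod_pos) (auto dest: Pr_pos)
    then show ?thesis using le by simp
  qed
  also have "\<dots> = 2 * real k * ln 2" by (simp add: ln_realpow)
  finally show ?thesis .
qed

lemma block1:
  assumes "k \<ge> 1"
  shows "(\<Sum>p\<in>Pr k (2*k). ln (real p) / real p ^ 2) \<le> 2 * ln 2 / real k"
proof -
  have "(\<Sum>p\<in>Pr k (2*k). ln (real p) / real p ^ 2) \<le> (\<Sum>p\<in>Pr k (2*k). ln (real p) / real k ^ 2)"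
  proof (rule sum_mono)
    fix p assume "p \<in> Pr k (2*k)"
    then have "k < p" "p \<ge> 1" unfolding Pr_def using prime_ge_1_nat by auto
    then show "ln (real p) / real p ^ 2 \<le> ln (real p) / real k ^ 2"
      using assms by (intro divide_left_mono) (auto intro!: power_mono mult_pos_pos)
  qed
  also have "\<dots> = (\<Sum>p\<in>Pr k (2*k). ln (real p)) / real k ^ 2" by (simp add: sum_divide_distrib)
  also have "\<dots> \<le> (2 * real k * ln 2) / real k ^ 2"
    using block_theta[OF assms] by (intro divide_right_mono) auto
  also have "\<dots> = 2 * ln 2 / real k" using assms by (simp add: power2_eq_square)
  finally show ?thesis .
qed

lemma block2:
  assumes "k \<ge> 1"
  shows "(\<Sum>p\<in>Pr k (2*k). ln (real p) ^ 2 / real p ^ 2) \<le> 2 * ln 2 * (ln (real k) + ln 2) / real k"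
proof -
  have "(\<Sum>p\<in>Pr k (2*k). ln (real p) ^ 2 / real p ^ 2) \<le> (\<Sum>p\<in>Pr k (2*k). ln (2 * real k) * (ln (real p) / real p ^ 2))"
  proof (rule sum_mono)
    fix p assume "p \<in> Pr k (2*k)"
    then have "k < p" "p \<le> 2*k" "p \<ge> 1" unfolding Pr_def using prime_ge_1_nat by auto
    then have "ln (real p) \<le> ln (2 * real k)" "0 \<le> ln (real p)" by auto
    then show "ln (real p) ^ 2 / real p ^ 2 \<le> ln (2 * real k) * (ln (real p) / real p ^ 2)"
      by (simp add: power2_eq_square divide_right_mono mult_right_mono)
  qed
  also have "\<dots> = ln (2 * real k) * (\<Sum>p\<in>Pr k (2*k). ln (real p) / real p ^ 2)"
    by (simp add: sum_distrib_left)
  also have "\<dots> \<le> ln (2 * real k) * (2 * ln 2 / real k)"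
    using block1[OF assms] assms by (intro mult_left_mono) auto
  also have "\<dots> = 2 * ln 2 * (ln (real k) + ln 2) / real k"
    using assms by (simp add: ln_mult)
  finally show ?thesis .
qed

lemma Pr_split:
  assumes "a \<le> b" "b \<le> c"
  shows "Pr a c = Pr a b \<union> Pr b c" "Pr a b \<inter> Pr b c = {}"
  using assms unfolding Pr_def by auto

lemma dyadic1:
  "k \<ge> 1 \<Longrightarrow> (\<Sum>p\<in>Pr k (2^N*k). ln (real p) / real p ^ 2) \<le> 4 * ln 2 / real k"
proof (induction N arbitrary: k)
  case 0
  have "Pr k k = {}" unfolding Pr_def by auto
  then show ?case by simp
next
  case (Suc N)
  have sp: "Pr k (2^Suc N*k) = Pr k (2*k) \<union> Pr (2*k) (2^N*(2*k))" "Pr k (2*k) \<inter> Pr (2*k) (2^N*(2*k)) = {}"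
    using Pr_split[of k "2*k" "2^N*(2*k)"] by (auto simp: mult_ac)
  have "(\<Sum>p\<in>Pr k (2^Suc N*k). ln (real p) / real p ^ 2)
     = (\<Sum>p\<in>Pr k (2*k). ln (real p) / real p ^ 2) + (\<Sum>p\<in>Pr (2*k) (2^N*(2*k)). ln (real p) / real p ^ 2)"
    unfolding sp(1) by (rule sum.union_disjoint) (use sp(2) in auto)
  also have "\<dots> \<le> 2 * ln 2 / real k + 4 * ln 2 / real (2*k)"
    using block1[OF Suc.prems] Suc.IH[of "2*k"] Suc.prems by (intro add_mono) auto
  also have "\<dots> = 4 * ln 2 / real k" by simp
  finally show ?case .
qed

lemma dyadic2:
  "k \<ge> 1 \<Longrightarrow> (\<Sum>p\<in>Pr k (2^N*k). ln (real p) ^ 2 / real p ^ 2) \<le> 4 * ln 2 * (ln (real k) + 2) / real k"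
proof (induction N arbitrary: k)
  case 0
  have "Pr k k = {}" unfolding Pr_def by auto
  then show ?case using 0 by simp
next
  case (Suc N)
  have sp: "Pr k (2^Suc N*k) = Pr k (2*k) \<union> Pr (2*k) (2^N*(2*k))" "Pr k (2*k) \<inter> Pr (2*k) (2^N*(2*k)) = {}"
    using Pr_split[of k "2*k" "2^N*(2*k)"] by (auto simp: mult_ac)
  have "(\<Sum>p\<in>Pr k (2^Suc N*k). ln (real p) ^ 2 / real p ^ 2)
     = (\<Sum>p\<in>Pr k (2*k). ln (real p) ^ 2 / real p ^ 2) + (\<Sum>p\<in>Pr (2*k) (2^N*(2*k)). ln (real p) ^ 2 / real p ^ 2)"
    unfolding sp(1) by (rule sum.union_disjoint) (use sp(2) in auto)
  also have "\<dots> \<le> 2 * ln 2 * (ln (real k) + ln 2) / real k + 4 * ln 2 * (ln (real (2*k)) + 2) / real (2*k)"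
    using block2[OF Suc.prems] Suc.IH[of "2*k"] Suc.prems by (intro add_mono) auto
  also have "\<dots> = 2 * ln 2 * (2 * ln (real k) + 2 * ln 2 + 2) / real k"
    using Suc.prems by (simp add: ln_mult field_simps)
  also have "\<dots> \<le> 4 * ln 2 * (ln (real k) + 2) / real k"
  proof -
    have "ln (2::real) \<le> 1" using ln_le_minus_one[of 2] by simp
    then have "2 * ln 2 * (2 * ln (real k) + 2 * ln 2 + 2) \<le> 4 * ln 2 * (ln (real k) + 2)"
      by (simp add: algebra_simps)
    then show ?thesis using Suc.prems by (intro divide_right_mono) auto
  qed
  finally show ?case .
qed

lemma prime_sum1:
  assumes "m \<ge> 1"
  shows "(\<Sum>p\<in>Pr m n. ln (real p) / real p ^ 2) \<le> 4 * ln 2 / real m"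
proof -
  have "Pr m n \<subseteq> Pr m (2^n*m)"
  proof -
    have "n < 2^n" by (rule less_exp)
    also have "2^n \<le> 2^n*m" using assms by simp
    finally show ?thesis unfolding Pr_def by auto
  qed
  then have "(\<Sum>p\<in>Pr m n. ln (real p) / real p ^ 2) \<le> (\<Sum>p\<in>Pr m (2^n*m). ln (real p) / real p ^ 2)"
    by (intro sum_mono2) (auto simp: Pr_def prime_ge_1_nat)
  also have "\<dots> \<le> 4 * ln 2 / real m" by (rule dyadic1[OF assms])
  finally show ?thesis .
qed

lemma prime_sum2:
  assumes "m \<ge> 1"
  shows "(\<Sum>p\<in>Pr m n. ln (real p) ^ 2 / real p ^ 2) \<le> 4 * ln 2 * (ln (real m) + 2) / real m"
proof -
  have "Pr m n \<subseteq> Pr m (2^n*m)"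
  proof -
    have "n < 2^n" by (rule less_exp)
    also have "2^n \<le> 2^n*m" using assms by simp
    finally show ?thesis unfolding Pr_def by auto
  qed
  then have "(\<Sum>p\<in>Pr m n. ln (real p) ^ 2 / real p ^ 2) \<le> (\<Sum>p\<in>Pr m (2^n*m). ln (real p) ^ 2 / real p ^ 2)"
    by (intro sum_mono2) (auto simp: Pr_def prime_ge_1_nat)
  also have "\<dots> \<le> 4 * ln 2 * (ln (real m) + 2) / real m" by (rule dyadic2[OF assms])
  finally show ?thesis .
qed

definition ind :: "nat \<Rightarrow> nat \<Rightarrow> real" where
  "ind p u = (if p dvd u then 1 else 0)"

definition ee :: "nat \<Rightarrow> nat \<Rightarrow> nat \<Rightarrow> nat \<Rightarrow> real" where
  "ee n m u v = (\<Sum>p\<in>Pr m n. ln (real p) * (ind p u * ind p v))"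

lemma ind_nonneg[simp]: "0 \<le> ind p u" unfolding ind_def by simp
lemma ind_le1: "ind p u \<le> 1" unfolding ind_def by simp
lemma ind_sq[simp]: "ind p u * ind p u = ind p u" unfolding ind_def by simp

lemma ee_nonneg: "0 \<le> ee n m u v"
  unfolding ee_def by (intro sum_nonneg mult_nonneg_nonneg) (auto simp: Pr_def dest: prime_ge_1_nat)

lemma card_multiples: "d \<ge> 1 \<Longrightarrow> real (card {a\<in>{1..n}. d dvd a}) \<le> real n / real d"
proof -
  assume d: "d \<ge> 1"
  have "card {a\<in>{1..n}. d dvd a} \<le> card {1..n div d}"
  proof (rule card_inj_on_le[where f = "\<lambda>a. a div d"])
    show "inj_on (\<lambda>a. a div d) {a \<in> {1..n}. d dvd a}"
      using d by (auto simp: inj_on_def elim!: dvdE)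
    show "(\<lambda>a. a div d) ` {a \<in> {1..n}. d dvd a} \<subseteq> {1..n div d}"
      using d by (auto elim!: dvdE simp: less_eq_div_iff_mult_less_eq mult.commute)
  qed auto
  then have "real (card {a\<in>{1..n}. d dvd a}) \<le> real (n div d)" by simp
  also have "real (n div d) \<le> real n / real d"
  proof -
    have "d * (n div d) \<le> n" by simp
    then have "real d * real (n div d) \<le> real n" by (metis of_nat_le_iff of_nat_mult)
    then show ?thesis using d by (simp add: field_simps)
  qed
  finally show ?thesis .
qed

lemma avg_ind: "d \<ge> 1 \<Longrightarrow> n \<ge> 1 \<Longrightarrow> avg {1..n} (ind d) \<le> 1 / real d"
proof -
  assume d: "d \<ge> 1" and n: "n \<ge> 1"
  have "sum (ind d) {1..n} = real (card {a\<in>{1..n}. d dvd a})"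
    unfolding ind_def by (simp flip: sum.inter_filter)
  then have "avg {1..n} (ind d) = real (card {a\<in>{1..n}. d dvd a}) / real n"
    unfolding avg_def by simp
  also have "\<dots> \<le> (real n / real d) / real n"
    by (intro divide_right_mono card_multiples d) auto
  also have "\<dots> = 1 / real d" using n by simp
  finally show ?thesis .
qed

lemma ind_two_primes:
  assumes "prime p" "prime q" "p \<noteq> q"
  shows "ind p u * ind q u = ind (p*q) u"
proof -
  have "p dvd u \<and> q dvd u \<longleftrightarrow> p * q dvd u"
  proof
    assume "p dvd u \<and> q dvd u"
    moreover have "coprime p q" using assms by (simp add: primes_coprime)
    ultimately show "p * q dvd u" by (simp add: divides_mult)
  next
    assume "p * q dvd u" then show "p dvd u \<and> q dvd u"
      by (meson dvd_mult_left dvd_mult_right)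
  qed
  then show ?thesis unfolding ind_def by auto
qed

lemma avg_ind2:
  assumes "prime p" "prime q" "p \<noteq> q" "n \<ge> 1"
  shows "avg {1..n} (\<lambda>a. ind p a * ind q a) \<le> 1 / real p * (1 / real q)"
proof -
  have "avg {1..n} (\<lambda>a. ind p a * ind q a) = avg {1..n} (ind (p*q))"
    using ind_two_primes[OF assms(1-3)] by simp
  also have "\<dots> \<le> 1 / real (p*q)"
    using assms by (intro avg_ind) (auto simp: prime_ge_1_nat dest: prime_gt_0_nat)
  finally show ?thesis by simp
qed

lemma double_sum_bound:
  fixes F :: "nat \<Rightarrow> nat \<Rightarrow> real"
  assumes "finite P"
    and "\<And>p. p \<in> P \<Longrightarrow> F p p \<le> d p"
    and "\<And>p q. p \<in> P \<Longrightarrow> q \<in> P \<Longrightarrow> p \<noteq> q \<Longrightarrow> F p q \<le> g p * g q"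
    and "\<And>p. p \<in> P \<Longrightarrow> 0 \<le> g p"
  shows "(\<Sum>p\<in>P. \<Sum>q\<in>P. F p q) \<le> (\<Sum>p\<in>P. d p) + (\<Sum>p\<in>P. g p)^2"
proof -
  have "(\<Sum>p\<in>P. \<Sum>q\<in>P. F p q) = (\<Sum>p\<in>P. F p p + (\<Sum>q\<in>P-{p}. F p q))"
    using assms(1) by (intro sum.cong refl) (simp add: sum.remove)
  also have "\<dots> \<le> (\<Sum>p\<in>P. d p + (\<Sum>q\<in>P. g p * g q))"
  proof (intro sum_mono add_mono)
    fix p assume p: "p \<in> P"
    show "F p p \<le> d p" using assms(2) p .
    have "(\<Sum>q\<in>P-{p}. F p q) \<le> (\<Sum>q\<in>P-{p}. g p * g q)"
      using assms(3) p by (intro sum_mono) auto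
    also have "\<dots> \<le> (\<Sum>q\<in>P. g p * g q)"
      using assms(1,4) p by (intro sum_mono2) auto
    finally show "(\<Sum>q\<in>P-{p}. F p q) \<le> (\<Sum>q\<in>P. g p * g q)" .
  qed
  also have "\<dots> = (\<Sum>p\<in>P. d p) + (\<Sum>p\<in>P. g p)^2"
    by (simp add: sum.distrib power2_eq_square sum_product)
  finally show ?thesis .
qed

lemma Pr_facts: "p \<in> Pr m n \<Longrightarrow> prime p \<and> p \<ge> 1 \<and> m < p \<and> p \<le> n \<and> 0 \<le> ln (real p)"
  unfolding Pr_def by (auto dest: prime_ge_1_nat)

lemma Q2_eq:
  "avg A (\<lambda>a. avg A (\<lambda>b. (ee n m a b)^2))
   = (\<Sum>p\<in>Pr m n. \<Sum>q\<in>Pr m n. ln (real p) * ln (real q) * (avg A (\<lambda>a. ind p a * ind q a))^2)"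
proof -
  have "(ee n m a b)^2 = (\<Sum>p\<in>Pr m n. \<Sum>q\<in>Pr m n. ln (real p) * ln (real q) * ((ind p a * ind q a) * (ind p b * ind q b)))" for a b
    unfolding ee_def power2_eq_square sum_product by (intro sum.cong refl) (simp add: mult_ac)
  then show ?thesis
    by (simp only: avg_sum avg_cmult avg_multc power2_eq_square)
qed

lemma Q3_eq:
  "avg A (\<lambda>a. avg A (\<lambda>b. avg A (\<lambda>c. ee n m a b * ee n m a c)))
   = (\<Sum>p\<in>Pr m n. \<Sum>q\<in>Pr m n. ln (real p) * ln (real q) * (avg A (\<lambda>a. ind p a * ind q a) * (avg A (ind p) * avg A (ind q))))"
proof -
  have "ee n m a b * ee n m a c = (\<Sum>p\<in>Pr m n. \<Sum>q\<in>Pr m n. ln (real p) * ln (real q) * ((ind p a * ind q a) * (ind p b * ind q c)))" for a b c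
    unfolding ee_def sum_product by (intro sum.cong refl) (simp add: mult_ac)
  then show ?thesis
    by (simp only: avg_sum avg_cmult avg_multc)
qed

definition L1 where "L1 m n = (\<Sum>p\<in>Pr m n. ln (real p) / real p ^ 2)"
definition L2 where "L2 m n = (\<Sum>p\<in>Pr m n. ln (real p) ^ 2 / real p ^ 2)"

lemma avg_ind_nonneg: "0 \<le> avg A (\<lambda>a. ind p a * ind q a)" "0 \<le> avg A (ind p)"
  by (auto intro!: avg_nonneg)

lemma Q2_bound:
  assumes "n \<ge> 1"
  shows "avg {1..n} (\<lambda>a. avg {1..n} (\<lambda>b. (ee n m a b)^2)) \<le> L2 m n + (L1 m n)^2"
  unfolding Q2_eq L1_def L2_def
proof (rule double_sum_bound)
  fix p assume p: "p \<in> Pr m n"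
  note pf = Pr_facts[OF p]
  have a: "avg {1..n} (ind p) \<le> 1 / real p" using avg_ind pf assms by auto
  have "(avg {1..n} (ind p))^2 \<le> (1 / real p)^2"
    using a by (intro power_mono) (auto intro!: avg_nonneg)
  then have "ln (real p) * ln (real p) * (avg {1..n} (ind p))^2 \<le> ln (real p) * ln (real p) * (1 / real p)^2"
    using pf by (intro mult_left_mono) auto
  then show "ln (real p) * ln (real p) * (avg {1..n} (\<lambda>a. ind p a * ind p a))\<^sup>2 \<le> ln (real p) ^ 2 / real p ^ 2"
    by (simp add: power2_eq_square)
next
  fix p q assume p: "p \<in> Pr m n" and q: "q \<in> Pr m n" and pq: "p \<noteq> q"
  note pf = Pr_facts[OF p] and qf = Pr_facts[OF q]
  have a: "avg {1..n} (\<lambda>a. ind p a * ind q a) \<le> 1 / real p * (1 / real q)"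
    using avg_ind2 pf qf pq assms by auto
  have "(avg {1..n} (\<lambda>a. ind p a * ind q a))^2 \<le> (1 / real p * (1 / real q))^2"
    using a by (intro power_mono) (auto intro!: avg_nonneg)
  then have "ln (real p) * ln (real q) * (avg {1..n} (\<lambda>a. ind p a * ind q a))^2
      \<le> ln (real p) * ln (real q) * (1 / real p * (1 / real q))^2"
    using pf qf by (intro mult_left_mono) auto
  also have "\<dots> = ln (real p) / real p ^ 2 * (ln (real q) / real q ^ 2)"
    by (simp add: power2_eq_square field_simps)
  finally show "ln (real p) * ln (real q) * (avg {1..n} (\<lambda>a. ind p a * ind q a))^2
      \<le> ln (real p) / real p ^ 2 * (ln (real q) / real q ^ 2)" .
next
  fix p assume p: "p \<in> Pr m n"
  then show "0 \<le> ln (real p) / real p ^ 2" using Pr_facts[OF p] by auto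
qed auto

lemma Q3_bound:
  assumes "n \<ge> 1" "m \<ge> 1"
  shows "avg {1..n} (\<lambda>a. avg {1..n} (\<lambda>b. avg {1..n} (\<lambda>c. ee n m a b * ee n m a c))) \<le> L2 m n / real m + (L1 m n)^2"
proof -
  have "avg {1..n} (\<lambda>a. avg {1..n} (\<lambda>b. avg {1..n} (\<lambda>c. ee n m a b * ee n m a c)))
     \<le> (\<Sum>p\<in>Pr m n. ln (real p) ^ 2 / real p ^ 2 / real m) + (L1 m n)^2"
  unfolding Q3_eq L1_def
  proof (rule double_sum_bound)
    fix p assume p: "p \<in> Pr m n"
    note pf = Pr_facts[OF p]
    have a: "avg {1..n} (ind p) \<le> 1 / real p" using avg_ind pf assms by auto
    have a0: "0 \<le> avg {1..n} (ind p)" by (auto intro!: avg_nonneg)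
    have "avg {1..n} (ind p) * (avg {1..n} (ind p) * avg {1..n} (ind p)) \<le> 1 / real p * (1 / real p * (1 / real p))"
      using a a0 by (intro mult_mono) (auto intro: mult_mono mult_nonneg_nonneg)
    also have "\<dots> \<le> 1 / real p ^ 2 / real m"
      using pf assms by (simp add: power2_eq_square divide_simps)
    finally have "ln (real p) * ln (real p) * (avg {1..n} (ind p) * (avg {1..n} (ind p) * avg {1..n} (ind p)))
        \<le> ln (real p) * ln (real p) * (1 / real p ^ 2 / real m)"
      using pf by (intro mult_left_mono) auto
    then show "ln (real p) * ln (real p) * (avg {1..n} (\<lambda>a. ind p a * ind p a) * (avg {1..n} (ind p) * avg {1..n} (ind p)))
        \<le> ln (real p) ^ 2 / real p ^ 2 / real m"
      by (simp add: power2_eq_square)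
  next
    fix p q assume p: "p \<in> Pr m n" and q: "q \<in> Pr m n" and pq: "p \<noteq> q"
    note pf = Pr_facts[OF p] and qf = Pr_facts[OF q]
    have a: "avg {1..n} (\<lambda>a. ind p a * ind q a) \<le> 1 / real p * (1 / real q)"
      using avg_ind2 pf qf pq assms by auto
    have b: "avg {1..n} (ind p) \<le> 1 / real p" "avg {1..n} (ind q) \<le> 1 / real q"
      using avg_ind pf qf assms by auto
    have "avg {1..n} (\<lambda>a. ind p a * ind q a) * (avg {1..n} (ind p) * avg {1..n} (ind q))
       \<le> (1 / real p * (1 / real q)) * (1 / real p * (1 / real q))"
      using a b by (intro mult_mono) (auto intro!: avg_nonneg mult_nonneg_nonneg)
    then have "ln (real p) * ln (real q) * (avg {1..n} (\<lambda>a. ind p a * ind q a) * (avg {1..n} (ind p) * avg {1..n} (ind q)))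
      \<le> ln (real p) * ln (real q) * ((1 / real p * (1 / real q)) * (1 / real p * (1 / real q)))"
      using pf qf by (intro mult_left_mono) auto
    also have "\<dots> = ln (real p) / real p ^ 2 * (ln (real q) / real q ^ 2)"
      by (simp add: power2_eq_square field_simps)
    finally show "ln (real p) * ln (real q) * (avg {1..n} (\<lambda>a. ind p a * ind q a) * (avg {1..n} (ind p) * avg {1..n} (ind q)))
      \<le> ln (real p) / real p ^ 2 * (ln (real q) / real q ^ 2)" .
  next
    fix p assume p: "p \<in> Pr m n"
    then show "0 \<le> ln (real p) / real p ^ 2" using Pr_facts[OF p] by auto
  qed auto
  also have "(\<Sum>p\<in>Pr m n. ln (real p) ^ 2 / real p ^ 2 / real m) = L2 m n / real m"
    unfolding L2_def by (simp add: sum_divide_distrib)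
  finally show ?thesis .
qed

definition D :: "nat \<Rightarrow> nat \<Rightarrow> (nat \<Rightarrow> nat) \<Rightarrow> nat \<Rightarrow> real" where
  "D n m x k = (\<Sum>j\<in>{1..m}-{k}. ee n m (x k) (x j))"

lemma D_nonneg: "0 \<le> D n m x k"
  unfolding D_def by (intro sum_nonneg ee_nonneg)

lemma lam_iff: "prime p \<Longrightarrow> u \<ge> 1 \<Longrightarrow> (lam p u \<ge> 1) \<longleftrightarrow> p dvd u"
  unfolding lam_def using prime_multiplicity_gt_zero_iff[of p u] by auto

lemma S_repr:
  assumes "m \<ge> 1" "\<And>j. j \<in> {1..m} \<Longrightarrow> x j \<ge> 1"
  shows "S n m x = (\<Sum>p\<in>Pr m n. ln (real p) *
     ((\<Sum>j\<in>{1..m}. ind p (x j)) - (if \<exists>j\<in>{1..m}. p dvd x j then 1 else 0)))"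
  unfolding S_def Pr_def[symmetric]
proof (rule sum.cong[OF refl])
  fix p assume p: "p \<in> Pr m n"
  then have pp: "prime p" using Pr_facts by auto
  have s1: "(\<Sum>k = 1..m. if 1 \<le> lam p (x k) then 1 else 0) = (\<Sum>j\<in>{1..m}. ind p (x j))"
  proof (rule sum.cong[OF refl])
    fix j assume j: "j \<in> {1..m}"
    have "(1 \<le> lam p (x j)) = (p dvd x j)" by (rule lam_iff[OF pp assms(2)[OF j]])
    then show "(if 1 \<le> lam p (x j) then 1 else 0) = ind p (x j)"
      by (simp add: ind_def)
  qed
  have fin: "finite ((\<lambda>k. lam p (x k)) ` {1..m})" by simp
  have ne: "(\<lambda>k. lam p (x k)) ` {1..m} \<noteq> {}" using assms(1) by simp
  have "(1 \<le> Max ((\<lambda>k. lam p (x k)) ` {1..m})) \<longleftrightarrow> (\<exists>a\<in>(\<lambda>k. lam p (x k)) ` {1..m}. 1 \<le> a)"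
    by (rule Max_ge_iff[OF fin ne])
  also have "\<dots> \<longleftrightarrow> (\<exists>k\<in>{1..m}. 1 \<le> lam p (x k))" by simp
  also have "\<dots> \<longleftrightarrow> (\<exists>j\<in>{1..m}. p dvd x j)"
    by (rule bex_cong[OF refl]) (rule lam_iff[OF pp assms(2)])
  finally have s2: "(if 1 \<le> Max ((\<lambda>k. lam p (x k)) ` {1..m}) then 1 else 0) =
       (if \<exists>j\<in>{1..m}. p dvd x j then 1 else (0::real))" by simp
  show "ln (real p) * ((\<Sum>k = 1..m. if 1 \<le> lam p (x k) then 1 else 0) -
          (if 1 \<le> Max ((\<lambda>k. lam p (x k)) ` {1..m}) then 1 else 0)) =
        ln (real p) * ((\<Sum>j\<in>{1..m}. ind p (x j)) - (if \<exists>j\<in>{1..m}. p dvd x j then 1 else 0))"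
    by (simp only: s1 s2)
qed

lemma key_ineq:
  fixes a :: real
  assumes "a \<ge> 0" "E \<Longrightarrow> a \<ge> 1" "\<not> E \<Longrightarrow> a = 0"
  shows "\<bar>(ind p u + a - (if p dvd u \<or> E then 1 else 0)) - (ind p v + a - (if p dvd v \<or> E then 1 else 0))\<bar>
     \<le> ind p u * a + ind p v * a"
proof (cases E)
  case True
  then have "a \<ge> 1" using assms by auto
  then show ?thesis using True unfolding ind_def by auto
next
  case False
  then have "a = 0" using assms by auto
  then show ?thesis using False unfolding ind_def by auto
qed

lemma diff_bound:
  assumes "m \<ge> 1" "k \<in> {1..m}" "\<And>j. j \<in> {1..m} \<Longrightarrow> x j \<ge> 1" "y \<ge> 1"
  shows "\<bar>S n m x - S n m (x(k:=y))\<bar> \<le> D n m x k + D n m (x(k:=y)) k"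
proof -
  define J where "J = {1..m} - {k}"
  have IJ: "{1..m} = insert k J" "k \<notin> J" "finite J" using assms(2) unfolding J_def by auto
  have x'1: "\<And>j. j \<in> {1..m} \<Longrightarrow> (x(k:=y)) j \<ge> 1" using assms by auto
  define a where "a p = (\<Sum>j\<in>J. ind p (x j))" for p
  have T: "(\<Sum>j\<in>{1..m}. ind p (z j)) - (if \<exists>j\<in>{1..m}. p dvd z j then 1 else 0)
      = ind p (z k) + a p - (if p dvd z k \<or> (\<exists>j\<in>J. p dvd x j) then 1 else 0)"
    if "\<forall>j\<in>J. z j = x j" for p z
  proof -
    have "(\<Sum>j\<in>{1..m}. ind p (z j)) = ind p (z k) + a p"
      unfolding IJ(1) a_def using IJ that by (simp add: sum.insert)
    moreover have "(\<exists>j\<in>{1..m}. p dvd z j) \<longleftrightarrow> p dvd z k \<or> (\<exists>j\<in>J. p dvd x j)"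
      unfolding IJ(1) using that by auto
    ultimately show ?thesis by simp
  qed
  have aprops: "a p \<ge> 0" "(\<exists>j\<in>J. p dvd x j) \<Longrightarrow> a p \<ge> 1" "\<not>(\<exists>j\<in>J. p dvd x j) \<Longrightarrow> a p = 0" for p
  proof -
    show "a p \<ge> 0" unfolding a_def by (intro sum_nonneg) auto
    show "(\<exists>j\<in>J. p dvd x j) \<Longrightarrow> a p \<ge> 1"
    proof -
      assume "\<exists>j\<in>J. p dvd x j"
      then obtain j where j: "j \<in> J" "p dvd x j" by auto
      have "ind p (x j) \<le> a p" unfolding a_def using j IJ(3)
        by (intro member_le_sum) auto
      then show "a p \<ge> 1" using j by (simp add: ind_def)
    qed
    show "\<not>(\<exists>j\<in>J. p dvd x j) \<Longrightarrow> a p = 0"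
      unfolding a_def ind_def by (intro sum.neutral) auto
  qed
  have e1: "S n m x = (\<Sum>p\<in>Pr m n. ln (real p) *
      (ind p (x k) + a p - (if p dvd x k \<or> (\<exists>j\<in>J. p dvd x j) then 1 else 0)))"
  proof -
    have "S n m x = (\<Sum>p\<in>Pr m n. ln (real p) *
     ((\<Sum>j\<in>{1..m}. ind p (x j)) - (if \<exists>j\<in>{1..m}. p dvd x j then 1 else 0)))"
      using assms(1) assms(3) by (rule S_repr)
    also have "\<dots> = (\<Sum>p\<in>Pr m n. ln (real p) *
      (ind p (x k) + a p - (if p dvd x k \<or> (\<exists>j\<in>J. p dvd x j) then 1 else 0)))"
      by (intro sum.cong refl arg_cong2[where f="(*)"] T) auto
    finally show ?thesis .
  qed
  have e2: "S n m (x(k:=y)) = (\<Sum>p\<in>Pr m n. ln (real p) *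
      (ind p y + a p - (if p dvd y \<or> (\<exists>j\<in>J. p dvd x j) then 1 else 0)))"
  proof -
    have ag: "\<forall>j\<in>J. (x(k:=y)) j = x j" using IJ(2) by auto
    have "S n m (x(k:=y)) = (\<Sum>p\<in>Pr m n. ln (real p) *
     ((\<Sum>j\<in>{1..m}. ind p ((x(k:=y)) j)) - (if \<exists>j\<in>{1..m}. p dvd (x(k:=y)) j then 1 else 0)))"
      using assms(1) x'1 by (rule S_repr)
    also have "\<dots> = (\<Sum>p\<in>Pr m n. ln (real p) *
      (ind p ((x(k:=y)) k) + a p - (if p dvd (x(k:=y)) k \<or> (\<exists>j\<in>J. p dvd x j) then 1 else 0)))"
      by (intro sum.cong refl arg_cong2[where f="(*)"] T ag)
    finally show ?thesis by simp
  qed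
  have eq: "S n m x - S n m (x(k:=y)) = (\<Sum>p\<in>Pr m n. ln (real p) *
      ((ind p (x k) + a p - (if p dvd x k \<or> (\<exists>j\<in>J. p dvd x j) then 1 else 0))
      - (ind p y + a p - (if p dvd y \<or> (\<exists>j\<in>J. p dvd x j) then 1 else 0))))"
    unfolding e1 e2 sum_subtractf[symmetric] right_diff_distrib[symmetric] ..
  have "\<bar>S n m x - S n m (x(k:=y))\<bar> \<le> (\<Sum>p\<in>Pr m n. \<bar>ln (real p) *
      ((ind p (x k) + a p - (if p dvd x k \<or> (\<exists>j\<in>J. p dvd x j) then 1 else 0))
      - (ind p y + a p - (if p dvd y \<or> (\<exists>j\<in>J. p dvd x j) then 1 else 0)))\<bar>)"
    unfolding eq by (rule sum_abs)
  also have "\<dots> \<le> (\<Sum>p\<in>Pr m n. ln (real p) * (ind p (x k) * a p + ind p y * a p))"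
  proof (rule sum_mono)
    fix p assume p: "p \<in> Pr m n"
    have l: "0 \<le> ln (real p)" using Pr_facts[OF p] by auto
    show "\<bar>ln (real p) *
      ((ind p (x k) + a p - (if p dvd x k \<or> (\<exists>j\<in>J. p dvd x j) then 1 else 0))
      - (ind p y + a p - (if p dvd y \<or> (\<exists>j\<in>J. p dvd x j) then 1 else 0)))\<bar>
      \<le> ln (real p) * (ind p (x k) * a p + ind p y * a p)"
    proof -
      have "\<bar>(ind p (x k) + a p - (if p dvd x k \<or> (\<exists>j\<in>J. p dvd x j) then 1 else 0))
      - (ind p y + a p - (if p dvd y \<or> (\<exists>j\<in>J. p dvd x j) then 1 else 0))\<bar> \<le> ind p (x k) * a p + ind p y * a p"
        by (rule key_ineq[of "a p" "\<exists>j\<in>J. p dvd x j", OF aprops(1)[of p] aprops(2)[of p] aprops(3)[of p]])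
      then show ?thesis unfolding abs_mult using l by (simp add: mult_left_mono)
    qed
  qed
  also have "\<dots> = D n m x k + D n m (x(k:=y)) k"
  proof -
    have "D n m (x(k:=y)) k = (\<Sum>j\<in>J. ee n m y (x j))"
      unfolding D_def J_def[symmetric] using IJ(2) by (intro sum.cong refl) auto
    moreover have "D n m x k = (\<Sum>j\<in>J. ee n m (x k) (x j))"
      unfolding D_def J_def by simp
    moreover have "(\<Sum>j\<in>J. ee n m u (x j)) = (\<Sum>p\<in>Pr m n. ln (real p) * (ind p u * a p))" for u
      unfolding ee_def a_def by (subst sum.swap) (simp add: sum_distrib_left)
    ultimately show ?thesis by (simp add: distrib_left sum.distrib)
  qed
  finally show ?thesis .
qed

lemma X_facts:
  assumes "n \<ge> 1"
  shows "finite (PiE {1..m::nat} (\<lambda>_. {1..n::nat}))" "PiE {1..m::nat} (\<lambda>_. {1..n::nat}) \<noteq> {}"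
  using assms by (auto intro!: finite_PiE simp: PiE_eq_empty_iff)

lemma avg_diff_sq:
  assumes "m \<ge> 1" "n \<ge> 1" "k \<in> {1..m}"
  shows "avg (PiE {1..m} (\<lambda>_. {1..n})) (\<lambda>x. avg {1..n} (\<lambda>y. (S n m x - S n m (x(k:=y)))^2))
     \<le> 4 * avg (PiE {1..m} (\<lambda>_. {1..n})) (\<lambda>x. (D n m x k)^2)"
proof -
  let ?X = "PiE {1..m} (\<lambda>_. {1..n})"
  have "avg ?X (\<lambda>x. avg {1..n} (\<lambda>y. (S n m x - S n m (x(k:=y)))^2))
     \<le> avg ?X (\<lambda>x. avg {1..n} (\<lambda>y. 2 * (D n m x k)^2 + 2 * (D n m (x(k:=y)) k)^2))"
  proof (intro avg_mono)
    fix x y assume x: "x \<in> ?X" and y: "y \<in> {1..n}"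
    have x1: "\<And>j. j \<in> {1..m} \<Longrightarrow> x j \<ge> 1" using x by (auto simp: PiE_def Pi_def)
    have b: "\<bar>S n m x - S n m (x(k:=y))\<bar> \<le> D n m x k + D n m (x(k:=y)) k"
      using diff_bound[OF assms(1) assms(3) x1] y by auto
    have "(S n m x - S n m (x(k:=y)))^2 \<le> (D n m x k + D n m (x(k:=y)) k)^2"
      using b by (metis abs_le_square_iff abs_of_nonneg add_nonneg_nonneg D_nonneg)
    also have "\<dots> \<le> 2 * (D n m x k)^2 + 2 * (D n m (x(k:=y)) k)^2"
      using sum_squares_bound[of "D n m x k" "D n m (x(k:=y)) k"]
      by (simp add: power2_eq_square algebra_simps)
    finally show "(S n m x - S n m (x(k:=y)))^2 \<le> 2 * (D n m x k)^2 + 2 * (D n m (x(k:=y)) k)^2" .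
  qed
  also have "\<dots> = 2 * avg ?X (\<lambda>x. (D n m x k)^2) + 2 * avg ?X (\<lambda>x. avg {1..n} (\<lambda>y. (D n m (x(k:=y)) k)^2))"
    using assms by (simp add: avg_add avg_cmult avg_const)
  also have "avg ?X (\<lambda>x. avg {1..n} (\<lambda>y. (D n m (x(k:=y)) k)^2)) = avg ?X (\<lambda>x. (D n m x k)^2)"
    using avg_resample[OF assms(3), of "{1..n}" "\<lambda>x. (D n m x k)^2"] assms by simp
  finally show ?thesis by linarith
qed

lemma avg_D_sq:
  assumes "m \<ge> 1" "n \<ge> 1" "k \<in> {1..m}"
  shows "avg (PiE {1..m} (\<lambda>_. {1..n})) (\<lambda>x. (D n m x k)^2)
     \<le> real m * avg {1..n} (\<lambda>a. avg {1..n} (\<lambda>b. (ee n m a b)^2))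
       + real m ^ 2 * avg {1..n} (\<lambda>a. avg {1..n} (\<lambda>b. avg {1..n} (\<lambda>c. ee n m a b * ee n m a c)))"
proof -
  let ?X = "PiE {1..m} (\<lambda>_. {1..n})"
  let ?Q2 = "avg {1..n} (\<lambda>a. avg {1..n} (\<lambda>b. (ee n m a b)^2))"
  let ?Q3 = "avg {1..n} (\<lambda>a. avg {1..n} (\<lambda>b. avg {1..n} (\<lambda>c. ee n m a b * ee n m a c)))"
  define J where "J = {1..m} - {k}"
  have fJ: "finite J" "J \<subseteq> {1..m}" "k \<notin> J" unfolding J_def by auto
  have cJ: "card J \<le> m" using card_mono[OF _ fJ(2)] by simp
  have Q3nn: "0 \<le> ?Q3" by (intro avg_nonneg mult_nonneg_nonneg ee_nonneg)
  have Q2nn: "0 \<le> ?Q2" by (intro avg_nonneg) simp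
  have "avg ?X (\<lambda>x. (D n m x k)^2) = avg ?X (\<lambda>x. \<Sum>j\<in>J. \<Sum>j'\<in>J. ee n m (x k) (x j) * ee n m (x k) (x j'))"
    unfolding D_def J_def[symmetric] power2_eq_square sum_product ..
  also have "\<dots> = (\<Sum>j\<in>J. \<Sum>j'\<in>J. avg ?X (\<lambda>x. ee n m (x k) (x j) * ee n m (x k) (x j')))"
    by (simp add: avg_sum)
  also have "\<dots> = (\<Sum>j\<in>J. ?Q2 + (\<Sum>j'\<in>J-{j}. ?Q3))"
  proof (rule sum.cong[OF refl])
    fix j assume j: "j \<in> J"
    have jk: "j \<in> {1..m}" "j \<noteq> k" using j fJ by auto
    have "(\<Sum>j'\<in>J. avg ?X (\<lambda>x. ee n m (x k) (x j) * ee n m (x k) (x j')))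
       = avg ?X (\<lambda>x. ee n m (x k) (x j) * ee n m (x k) (x j)) + (\<Sum>j'\<in>J-{j}. avg ?X (\<lambda>x. ee n m (x k) (x j) * ee n m (x k) (x j')))"
      using j fJ(1) by (simp add: sum.remove)
    also have "avg ?X (\<lambda>x. ee n m (x k) (x j) * ee n m (x k) (x j)) = ?Q2"
      using avg_coord2[OF assms(3) jk(1) jk(2)[symmetric], of "{1..n}" "\<lambda>a b. ee n m a b * ee n m a b"] assms
      by (simp add: power2_eq_square)
    also have "(\<Sum>j'\<in>J-{j}. avg ?X (\<lambda>x. ee n m (x k) (x j) * ee n m (x k) (x j'))) = (\<Sum>j'\<in>J-{j}. ?Q3)"
    proof (rule sum.cong[OF refl])
      fix j' assume j': "j' \<in> J - {j}"
      then have "j' \<in> {1..m}" "k \<noteq> j'" "j \<noteq> j'" using fJ by auto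
      then show "avg ?X (\<lambda>x. ee n m (x k) (x j) * ee n m (x k) (x j')) = ?Q3"
        using avg_coord3[OF assms(3) jk(1) _ jk(2)[symmetric], of j' "{1..n}" "\<lambda>a b c. ee n m a b * ee n m a c"] assms
        by simp
    qed
    finally show "(\<Sum>j'\<in>J. avg ?X (\<lambda>x. ee n m (x k) (x j) * ee n m (x k) (x j'))) = ?Q2 + (\<Sum>j'\<in>J-{j}. ?Q3)" .
  qed
  also have "\<dots> \<le> (\<Sum>j\<in>J. ?Q2 + real m * ?Q3)"
  proof (rule sum_mono)
    fix j assume "j \<in> J"
    have "card (J - {j}) \<le> m" using cJ by (meson card_Diff1_le dual_order.trans fJ(1))
    then have "real (card (J - {j})) * ?Q3 \<le> real m * ?Q3" using Q3nn by (intro mult_right_mono) auto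
    then show "?Q2 + (\<Sum>j'\<in>J-{j}. ?Q3) \<le> ?Q2 + real m * ?Q3" by simp
  qed
  also have "\<dots> = real (card J) * (?Q2 + real m * ?Q3)" by simp
  also have "\<dots> \<le> real m * (?Q2 + real m * ?Q3)"
    using cJ Q2nn Q3nn by (intro mult_right_mono) auto
  also have "\<dots> = real m * ?Q2 + real m ^ 2 * ?Q3" by (simp add: algebra_simps power2_eq_square)
  finally show ?thesis .
qed

lemma final_arith:
  fixes M a b q2 q3 l :: real
  assumes M: "M \<ge> 1" and a: "a \<ge> 0" "M * a \<le> 4" and b: "b \<ge> 0" "M * b \<le> 4 * (l + 2)"
    and l: "l \<ge> 1" and q2: "q2 \<le> b + a^2" and q3: "q3 \<le> b / M + a^2"
  shows "M * (4 * (M * q2 + M^2 * q3)) \<le> 224 * M * l"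
proof -
  have "M * q2 \<le> M * (b + a^2)" using q2 M by (intro mult_left_mono) auto
  then have "M * q2 \<le> M * b + M * a^2" by (simp add: distrib_left)
  moreover have "M^2 * q3 \<le> M * b + (M * a)^2"
  proof -
    have "M^2 * q3 \<le> M^2 * (b / M + a^2)" using q3 M by (intro mult_left_mono) auto
    also have "\<dots> = M * b + (M * a)^2" using M by (simp add: field_simps power2_eq_square)
    finally show ?thesis .
  qed
  moreover have "M * a^2 \<le> 16"
  proof -
    have "1 * a \<le> M * a" by (rule mult_right_mono) (use M a in auto)
    then have "a \<le> 4" using a by simp
    then have "M * a^2 = (M * a) * a" by (simp add: power2_eq_square)
    also have "\<dots> \<le> 4 * 4" using a \<open>a \<le> 4\<close> by (intro mult_mono) auto
    finally show ?thesis by simp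
  qed
  moreover have "(M * a)^2 \<le> 16"
  proof -
    have "(M * a)^2 \<le> 4^2" using a M by (intro power_mono) auto
    then show ?thesis by simp
  qed
  ultimately have "M * q2 + M^2 * q3 \<le> (M * b + 16) + (M * b + 16)"
    by (intro add_mono) auto
  also have "\<dots> \<le> (4 * (l + 2) + 16) + (4 * (l + 2) + 16)"
    using b by (intro add_mono) auto
  also have "\<dots> \<le> 56 * l" using l by simp
  finally have "M * q2 + M^2 * q3 \<le> 56 * l" .
  then have "M * (4 * (M * q2 + M^2 * q3)) \<le> M * (4 * (56 * l))" using M by (intro mult_left_mono) auto
  then show ?thesis by (simp add: algebra_simps)
qed

lemma var_bound:
  assumes m: "m \<ge> 3" and n: "n \<ge> (1::nat)"
  shows "measure_pmf.variance (unif_tuples n m) (S n m) \<le> 224 * real m * ln (real m)"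
    and "0 \<le> measure_pmf.variance (unif_tuples n m) (S n m)"
proof -
  let ?X = "PiE {1..m} (\<lambda>_. {1..n})"
  let ?Q2 = "avg {1..n} (\<lambda>a. avg {1..n} (\<lambda>b. (ee n m a b)^2))"
  let ?Q3 = "avg {1..n} (\<lambda>a. avg {1..n} (\<lambda>b. avg {1..n} (\<lambda>c. ee n m a b * ee n m a c)))"
  have m1: "m \<ge> 1" using m by simp
  note XF = X_facts[OF n, of m]
  have v: "measure_pmf.variance (unif_tuples n m) (S n m) = avg ?X (\<lambda>x. (S n m x - avg ?X (S n m))^2)"
    unfolding unif_tuples_def integral_pmf_of_set[OF XF(2) XF(1)] avg_def ..
  show "0 \<le> measure_pmf.variance (unif_tuples n m) (S n m)"
    unfolding v by (intro avg_nonneg) simp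
  have "measure_pmf.variance (unif_tuples n m) (S n m) = avg ?X (\<lambda>x. (S n m x)^2) - (avg ?X (S n m))^2"
    unfolding v avg_sq_expand[OF XF] by (simp add: power2_eq_square)
  also have "\<dots> \<le> (\<Sum>k\<in>{1..m}. avg ?X (\<lambda>x. avg {1..n} (\<lambda>y. (S n m x - S n m (x(k:=y)))^2)))"
    by (rule efron_stein) (use n in auto)
  also have "\<dots> \<le> (\<Sum>k\<in>{1..m}. 4 * (real m * ?Q2 + real m ^ 2 * ?Q3))"
  proof (rule sum_mono)
    fix k assume k: "k \<in> {1..m}"
    show "avg ?X (\<lambda>x. avg {1..n} (\<lambda>y. (S n m x - S n m (x(k:=y)))^2)) \<le> 4 * (real m * ?Q2 + real m ^ 2 * ?Q3)"
      using order_trans[OF avg_diff_sq[OF m1 n k] mult_left_mono[OF avg_D_sq[OF m1 n k], of 4]] by simp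
  qed
  also have "\<dots> = real m * (4 * (real m * ?Q2 + real m ^ 2 * ?Q3))" by simp
  also have "\<dots> \<le> 224 * real m * ln (real m)"
  proof (rule final_arith)
    show "1 \<le> real m" using m by simp
    show "0 \<le> L1 m n" unfolding L1_def by (intro sum_nonneg) (auto dest: Pr_facts)
    have mp: "real m > 0" using m by simp
    have ln2: "ln (2::real) \<le> 1" using ln_le_minus_one[of 2] by simp
    have "real m * L1 m n \<le> real m * (4 * ln 2 / real m)"
      unfolding L1_def using prime_sum1[OF m1, of n] mp by (intro mult_left_mono) auto
    also have "\<dots> = 4 * ln 2" using mp by simp
    also have "\<dots> \<le> 4" using ln2 by simp
    finally show "real m * L1 m n \<le> 4" .
    show "0 \<le> L2 m n" unfolding L2_def by (intro sum_nonneg) (auto dest: Pr_facts)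
    have l3: "ln (3::real) \<ge> 1"
      using ln_le_cancel_iff[of "exp 1" 3] exp_le by simp
    have "ln (3::real) \<le> ln (real m)" using m by (subst ln_le_cancel_iff) auto
    then show l: "ln (real m) \<ge> 1" using l3 by simp
    have "real m * L2 m n \<le> real m * (4 * ln 2 * (ln (real m) + 2) / real m)"
      unfolding L2_def using prime_sum2[OF m1, of n] mp by (intro mult_left_mono) auto
    also have "\<dots> = 4 * ln 2 * (ln (real m) + 2)" using mp by simp
    also have "\<dots> \<le> 4 * 1 * (ln (real m) + 2)"
      using ln2 l by (intro mult_right_mono mult_left_mono) auto
    finally show "real m * L2 m n \<le> 4 * (ln (real m) + 2)" by simp
    show "?Q2 \<le> L2 m n + (L1 m n)^2" by (rule Q2_bound[OF n])
    show "?Q3 \<le> L2 m n / real m + (L1 m n)^2" by (rule Q3_bound[OF n m1])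
  qed
  finally show "measure_pmf.variance (unif_tuples n m) (S n m) \<le> 224 * real m * ln (real m)" .
qed

theorem lemma6p3:
  fixes m :: "nat \<Rightarrow> nat"
  assumes "filterlim m at_top at_top"
    and "(\<lambda>n. real (m n)) \<in> o(\<lambda>n. real n)"
  shows "(\<lambda>n. measure_pmf.variance (unif_tuples n (m n)) (S n (m n)))
           \<in> O(\<lambda>n. real (m n) * ln (real (m n)))"
proof (rule bigoI)
  have "\<forall>Z. eventually (\<lambda>n. Z \<le> m n) at_top"
    using assms(1) unfolding filterlim_at_top by blast
  then have e1: "eventually (\<lambda>n. 3 \<le> m n) at_top" by blast
  have e2: "eventually (\<lambda>n. (1::nat) \<le> n) at_top" by (rule eventually_ge_at_top)
  have "eventually (\<lambda>n. 3 \<le> m n \<and> (1::nat) \<le> n) at_top"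
    using eventually_conj[OF e1 e2] .
  then show "eventually (\<lambda>n. norm (measure_pmf.variance (unif_tuples n (m n)) (S n (m n)))
          \<le> 224 * norm (real (m n) * ln (real (m n)))) at_top"
  proof (rule eventually_mono)
    fix n assume nn: "3 \<le> m n \<and> (1::nat) \<le> n"
    have l: "0 \<le> ln (real (m n))" using nn by simp
    have v0: "0 \<le> measure_pmf.variance (unif_tuples n (m n)) (S n (m n))"
      using var_bound(2)[of "m n" n] nn by blast
    have v1: "measure_pmf.variance (unif_tuples n (m n)) (S n (m n)) \<le> 224 * real (m n) * ln (real (m n))"
      using var_bound(1)[of "m n" n] nn by blast
    have "norm (real (m n) * ln (real (m n))) = real (m n) * ln (real (m n))"
      using l by simp
    then show "norm (measure_pmf.variance (unif_tuples n (m n)) (S n (m n)))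
          \<le> 224 * norm (real (m n) * ln (real (m n)))"
      using v0 v1 by (simp add: mult.assoc)
  qed
qed

end
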